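(* Let $k\ge2$. The graph $H_k$ has order $n=5k$, minimum degree $\delta(H_k)=2$, $\gamma_2(H_k)=\frac{3n}{5}$, and $\operatorname{ZIR}(H_k)=\frac{2n}{5}=n-\gamma_2(H_k)$. Furthermore, $\operatorname{Z}(H_k)=k+2$.
   Context: $H_k$ consists of $k$ disjoint 5-cycles, the $i$th with vertices $v_{i,1},\dots,v_{i,5}$ in cyclic order, together with edges $v_{i,3}v_{i+1,1}$ for $1\le i\le k-1$ and the edge $v_{k,3}v_{1,1}$. A 2-dominating set is a set $D$ such that every vertex not in $D$ has at least two neighbors in $D$; $\gamma_2$ is its minimum size. Zero forcing: a blue vertex $u$ changes a white vertex $w$ to blue if $w$ is the only white neighbor of $u$; $\operatorname{Z}(G)$ is the minimum size of a set of initially blue vertices from which all vertices eventually become blue. A nonempty $F\subseteq V(G)$ is a fort if every $v\notin F$ has $|N(v)\cap F|\ne1$. A private fort of $x\in S$ relative to $S$ is a fort $F$ with $S\cap F=\{x\}$; $S$ is a ZIr-set if every element of $S$ has a private fort. $\operatorname{ZIR}(G)$ is the maximum cardinality of an inclusion-maximal ZIr-set. *)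

theory Defs
  imports Complex_Main
begin

text \<open>Simple graphs are given by a finite vertex set V and a symmetric,
irreflexive adjacency relation E (only edges inside V matter).\<close>

definition nbrs :: "'a set \<Rightarrow> ('a \<Rightarrow> 'a \<Rightarrow> bool) \<Rightarrow> 'a \<Rightarrow> 'a set" where
  "nbrs V E v = {u \<in> V. E v u}"

definition min_degree :: "'a set \<Rightarrow> ('a \<Rightarrow> 'a \<Rightarrow> bool) \<Rightarrow> nat" where
  "min_degree V E = Min ((\<lambda>v. card (nbrs V E v)) ` V)"

definition two_dominating :: "'a set \<Rightarrow> ('a \<Rightarrow> 'a \<Rightarrow> bool) \<Rightarrow> 'a set \<Rightarrow> bool" where
  "two_dominating V E D \<longleftrightarrow> D \<subseteq> V \<and> (\<forall>v \<in> V - D. card (nbrs V E v \<inter> D) \<ge> 2)"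

definition gamma2 :: "'a set \<Rightarrow> ('a \<Rightarrow> 'a \<Rightarrow> bool) \<Rightarrow> nat" where
  "gamma2 V E = Min {card D | D. two_dominating V E D}"

text \<open>Zero forcing: the set of vertices that eventually become blue
(final colouring is independent of the order of forces).\<close>
inductive_set zf_closure :: "'a set \<Rightarrow> ('a \<Rightarrow> 'a \<Rightarrow> bool) \<Rightarrow> 'a set \<Rightarrow> 'a set"
  for V E S where
  init: "x \<in> S \<Longrightarrow> x \<in> V \<Longrightarrow> x \<in> zf_closure V E S"
| force: "u \<in> zf_closure V E S \<Longrightarrow> w \<in> nbrs V E u \<Longrightarrow>
          (\<forall>y \<in> nbrs V E u. y \<noteq> w \<longrightarrow> y \<in> zf_closure V E S) \<Longrightarrow>
          w \<in> zf_closure V E S"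

definition zero_forcing_set :: "'a set \<Rightarrow> ('a \<Rightarrow> 'a \<Rightarrow> bool) \<Rightarrow> 'a set \<Rightarrow> bool" where
  "zero_forcing_set V E S \<longleftrightarrow> S \<subseteq> V \<and> zf_closure V E S = V"

definition Z :: "'a set \<Rightarrow> ('a \<Rightarrow> 'a \<Rightarrow> bool) \<Rightarrow> nat" where
  "Z V E = Min {card S | S. zero_forcing_set V E S}"

definition is_fort :: "'a set \<Rightarrow> ('a \<Rightarrow> 'a \<Rightarrow> bool) \<Rightarrow> 'a set \<Rightarrow> bool" where
  "is_fort V E F \<longleftrightarrow> F \<noteq> {} \<and> F \<subseteq> V \<and> (\<forall>v \<in> V - F. card (nbrs V E v \<inter> F) \<noteq> 1)"

definition private_fort :: "'a set \<Rightarrow> ('a \<Rightarrow> 'a \<Rightarrow> bool) \<Rightarrow> 'a set \<Rightarrow> 'a \<Rightarrow> 'a set \<Rightarrow> bool" where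
  "private_fort V E S x F \<longleftrightarrow> is_fort V E F \<and> S \<inter> F = {x}"

definition ZIr_set :: "'a set \<Rightarrow> ('a \<Rightarrow> 'a \<Rightarrow> bool) \<Rightarrow> 'a set \<Rightarrow> bool" where
  "ZIr_set V E S \<longleftrightarrow> S \<subseteq> V \<and> (\<forall>x \<in> S. \<exists>F. private_fort V E S x F)"

definition maximal_ZIr_set :: "'a set \<Rightarrow> ('a \<Rightarrow> 'a \<Rightarrow> bool) \<Rightarrow> 'a set \<Rightarrow> bool" where
  "maximal_ZIr_set V E S \<longleftrightarrow> ZIr_set V E S \<and> (\<forall>T. ZIr_set V E T \<and> S \<subseteq> T \<longrightarrow> T = S)"

definition ZIR :: "'a set \<Rightarrow> ('a \<Rightarrow> 'a \<Rightarrow> bool) \<Rightarrow> nat" where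
  "ZIR V E = Max {card S | S. maximal_ZIr_set V E S}"

text \<open>The graph H_k: vertex (i,j) is v_{i,j}, 1 \<le> i \<le> k, 1 \<le> j \<le> 5.\<close>
definition Hk_V :: "nat \<Rightarrow> (nat \<times> nat) set" where
  "Hk_V k = {(i, j). 1 \<le> i \<and> i \<le> k \<and> 1 \<le> j \<and> j \<le> 5}"

definition Hk_link :: "nat \<Rightarrow> nat \<times> nat \<Rightarrow> nat \<times> nat \<Rightarrow> bool" where
  "Hk_link k a b \<longleftrightarrow>
     (\<exists>i. 1 \<le> i \<and> i \<le> k - 1 \<and> a = (i, 3) \<and> b = (i + 1, 1)) \<or> (a = (k, 3) \<and> b = (1, 1))"

definition Hk_E :: "nat \<Rightarrow> nat \<times> nat \<Rightarrow> nat \<times> nat \<Rightarrow> bool" where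
  "Hk_E k a b \<longleftrightarrow> a \<in> Hk_V k \<and> b \<in> Hk_V k \<and>
     ((fst a = fst b \<and> (snd b = snd a mod 5 + 1 \<or> snd a = snd b mod 5 + 1))
      \<or> Hk_link k a b \<or> Hk_link k b a)"

end

theory Submission
  imports Defs
begin


definition nx :: "nat \<Rightarrow> nat \<Rightarrow> nat" where "nx k i = (if i < k then i + 1 else 1)"
definition pv :: "nat \<Rightarrow> nat \<Rightarrow> nat" where "pv k i = (if 1 < i then i - 1 else k)"

lemma HkV_mem[simp]: "(a, b) \<in> Hk_V k \<longleftrightarrow> 1 \<le> a \<and> a \<le> k \<and> 1 \<le> b \<and> b \<le> 5"
  by (simp add: Hk_V_def)

lemma mod5: "(b::nat) \<le> 5 \<Longrightarrow> b mod 5 = (if b = 5 then 0 else b)"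
  by auto

lemma nb1: assumes "2 \<le> k" "1 \<le> i" "i \<le> k"
  shows "nbrs (Hk_V k) (Hk_E k) (i,1) = {(i,2),(i,5),(pv k i,3)}"
  using assms unfolding nbrs_def Hk_E_def Hk_link_def pv_def
  by (auto simp: mod5 split: if_splits)

lemma nb2: assumes "2 \<le> k" "1 \<le> i" "i \<le> k"
  shows "nbrs (Hk_V k) (Hk_E k) (i,2) = {(i,1),(i,3)}"
  using assms unfolding nbrs_def Hk_E_def Hk_link_def
  by (auto simp: mod5 split: if_splits)

lemma nb3: assumes "2 \<le> k" "1 \<le> i" "i \<le> k"
  shows "nbrs (Hk_V k) (Hk_E k) (i,3) = {(i,2),(i,4),(nx k i,1)}"
  using assms unfolding nbrs_def Hk_E_def Hk_link_def nx_def
  by (auto simp: mod5 split: if_splits)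

lemma nb4: assumes "2 \<le> k" "1 \<le> i" "i \<le> k"
  shows "nbrs (Hk_V k) (Hk_E k) (i,4) = {(i,3),(i,5)}"
  using assms unfolding nbrs_def Hk_E_def Hk_link_def
  by (auto simp: mod5 split: if_splits)

lemma nb5: assumes "2 \<le> k" "1 \<le> i" "i \<le> k"
  shows "nbrs (Hk_V k) (Hk_E k) (i,5) = {(i,4),(i,1)}"
  using assms unfolding nbrs_def Hk_E_def Hk_link_def
  by (auto simp: mod5 split: if_splits)

definition c3 :: "bool \<Rightarrow> bool \<Rightarrow> bool \<Rightarrow> bool" where
  "c3 a b c \<longleftrightarrow> (a \<and> b) \<or> (a \<and> c) \<or> (b \<and> c) \<or> (\<not> a \<and> \<not> b \<and> \<not> c)"

definition cyc :: "bool \<Rightarrow> bool \<Rightarrow> bool \<Rightarrow> bool \<Rightarrow> bool \<Rightarrow> bool \<Rightarrow> bool \<Rightarrow> bool" where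
  "cyc p f1 f2 f3 f4 f5 q \<longleftrightarrow> (\<not> f1 \<longrightarrow> c3 f2 f5 p) \<and> (\<not> f2 \<longrightarrow> (f1 \<longleftrightarrow> f3)) \<and> (\<not> f3 \<longrightarrow> c3 f2 f4 q)
     \<and> (\<not> f4 \<longrightarrow> (f3 \<longleftrightarrow> f5)) \<and> (\<not> f5 \<longrightarrow> (f4 \<longleftrightarrow> f1))"

definition fcyc :: "nat \<Rightarrow> (nat \<times> nat) set \<Rightarrow> nat \<Rightarrow> bool" where
  "fcyc k F i \<longleftrightarrow> cyc ((pv k i, 3) \<in> F) ((i,1) \<in> F) ((i,2) \<in> F) ((i,3) \<in> F) ((i,4) \<in> F) ((i,5) \<in> F) ((nx k i, 1) \<in> F)"

lemma card2: "a \<noteq> b \<Longrightarrow> card ({a,b} \<inter> F) = Suc 0 \<longleftrightarrow> \<not> (a \<in> F \<longleftrightarrow> b \<in> F)"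
  by (cases "a \<in> F"; cases "b \<in> F"; simp add: Int_insert_left)

lemma card3: "a \<noteq> b \<Longrightarrow> a \<noteq> c \<Longrightarrow> b \<noteq> c \<Longrightarrow> card ({a,b,c} \<inter> F) = Suc 0 \<longleftrightarrow> \<not> c3 (a \<in> F) (b \<in> F) (c \<in> F)"
  by (cases "a \<in> F"; cases "b \<in> F"; cases "c \<in> F"; simp add: Int_insert_left c3_def)

lemma dcard2: "a \<noteq> b \<Longrightarrow> 2 \<le> card ({a,b} \<inter> F) \<longleftrightarrow> (a \<in> F \<and> b \<in> F)"
  by (cases "a \<in> F"; cases "b \<in> F"; simp add: Int_insert_left)

lemma dcard3: "a \<noteq> b \<Longrightarrow> a \<noteq> c \<Longrightarrow> b \<noteq> c \<Longrightarrow> 2 \<le> card ({a,b,c} \<inter> F) \<longleftrightarrow> ((a \<in> F \<and> b \<in> F) \<or> (a \<in> F \<and> c \<in> F) \<or> (b \<in> F \<and> c \<in> F))"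
  by (cases "a \<in> F"; cases "b \<in> F"; cases "c \<in> F"; simp add: Int_insert_left)

lemma five: "{1..5::nat} = {1,2,3,4,5}" by auto

lemma fort_cond_i: assumes "2 \<le> k" "1 \<le> i" "i \<le> k"
  shows "(\<forall>j\<in>{1..5}. (i,j) \<notin> F \<longrightarrow> card (nbrs (Hk_V k) (Hk_E k) (i,j) \<inter> F) \<noteq> 1) \<longleftrightarrow> fcyc k F i"
proof -
  have "(\<forall>j\<in>{1..5}. (i,j) \<notin> F \<longrightarrow> card (nbrs (Hk_V k) (Hk_E k) (i,j) \<inter> F) \<noteq> 1) \<longleftrightarrow>
    ((i,1) \<notin> F \<longrightarrow> card (nbrs (Hk_V k) (Hk_E k) (i,1) \<inter> F) \<noteq> 1) \<and>
    ((i,2) \<notin> F \<longrightarrow> card (nbrs (Hk_V k) (Hk_E k) (i,2) \<inter> F) \<noteq> 1) \<and>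
    ((i,3) \<notin> F \<longrightarrow> card (nbrs (Hk_V k) (Hk_E k) (i,3) \<inter> F) \<noteq> 1) \<and>
    ((i,4) \<notin> F \<longrightarrow> card (nbrs (Hk_V k) (Hk_E k) (i,4) \<inter> F) \<noteq> 1) \<and>
    ((i,5) \<notin> F \<longrightarrow> card (nbrs (Hk_V k) (Hk_E k) (i,5) \<inter> F) \<noteq> 1)"
    unfolding five by simp
  also have "\<dots> \<longleftrightarrow> fcyc k F i"
    unfolding nb1[OF assms] nb2[OF assms] nb3[OF assms] nb4[OF assms] nb5[OF assms] fcyc_def cyc_def
    by (simp add: card2 card3)
  finally show ?thesis .
qed


definition LA :: "(nat \<Rightarrow> bool) \<Rightarrow> (nat \<Rightarrow> bool) \<Rightarrow> nat \<Rightarrow> bool" where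
  "LA s t j0 \<longleftrightarrow> (\<exists>p q a1 a2 a3 a4 a5 b1 b2 b3 b4 b5. cyc p a1 a2 a3 a4 a5 b1 \<and> cyc a3 b1 b2 b3 b4 b5 q \<and>
     (s 1 \<longrightarrow> (a1 \<longleftrightarrow> j0 = 1)) \<and> (s 2 \<longrightarrow> (a2 \<longleftrightarrow> j0 = 2)) \<and> (s 3 \<longrightarrow> (a3 \<longleftrightarrow> j0 = 3)) \<and> (s 4 \<longrightarrow> (a4 \<longleftrightarrow> j0 = 4)) \<and> (s 5 \<longrightarrow> (a5 \<longleftrightarrow> j0 = 5)) \<and> (t 1 \<longrightarrow> \<not> b1) \<and> (t 2 \<longrightarrow> \<not> b2) \<and> (t 3 \<longrightarrow> \<not> b3) \<and> (t 4 \<longrightarrow> \<not> b4) \<and> (t 5 \<longrightarrow> \<not> b5))"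

definition LB :: "(nat \<Rightarrow> bool) \<Rightarrow> (nat \<Rightarrow> bool) \<Rightarrow> nat \<Rightarrow> bool" where
  "LB s t j0 \<longleftrightarrow> (\<exists>p q a1 a2 a3 a4 a5 b1 b2 b3 b4 b5. cyc p a1 a2 a3 a4 a5 b1 \<and> cyc a3 b1 b2 b3 b4 b5 q \<and>
     (s 1 \<longrightarrow> \<not> a1) \<and> (s 2 \<longrightarrow> \<not> a2) \<and> (s 3 \<longrightarrow> \<not> a3) \<and> (s 4 \<longrightarrow> \<not> a4) \<and> (s 5 \<longrightarrow> \<not> a5) \<and> (t 1 \<longrightarrow> (b1 \<longleftrightarrow> j0 = 1)) \<and> (t 2 \<longrightarrow> (b2 \<longleftrightarrow> j0 = 2)) \<and> (t 3 \<longrightarrow> (b3 \<longleftrightarrow> j0 = 3)) \<and> (t 4 \<longrightarrow> (b4 \<longleftrightarrow> j0 = 4)) \<and> (t 5 \<longrightarrow> (b5 \<longleftrightarrow> j0 = 5)))"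

definition cnt :: "(nat \<Rightarrow> bool) \<Rightarrow> nat" where
  "cnt s = of_bool (s 1) + of_bool (s 2) + of_bool (s 3) + of_bool (s 4) + of_bool (s 5)"

lemma pair_le1:
  assumes "\<not> (t 1 \<and> t 2)" "\<not> (t 1 \<and> t 3)" "\<not> (t 1 \<and> t 4)" "\<not> (t 1 \<and> t 5)" "\<not> (t 2 \<and> t 3)"
    "\<not> (t 2 \<and> t 4)" "\<not> (t 2 \<and> t 5)" "\<not> (t 3 \<and> t 4)" "\<not> (t 3 \<and> t 5)" "\<not> (t 4 \<and> t 5)"
  shows "cnt t \<le> 1"
  unfolding cnt_def using assms by (cases "t 1"; cases "t 2"; cases "t 3"; cases "t 4"; cases "t 5"; simp)

lemma zir_pure:
  assumes HA: "\<And>j0. s j0 \<Longrightarrow> LA s t j0" and HB: "\<And>j0. t j0 \<Longrightarrow> LB s t j0"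
  shows "cnt s \<le> 3 \<and> (cnt s = 3 \<longrightarrow> cnt t \<le> 1)"
proof -
  have f0: "\<not> (s 1 \<and> s 2 \<and> s 3)"
  proof
    assume a: "s 1 \<and> s 2 \<and> s 3"
    then have "LA s t 1" using HA by blast
    then show False using a unfolding LA_def cyc_def c3_def by auto
  qed
  have f1: "\<not> (s 1 \<and> s 2 \<and> s 4 \<and> t 1 \<and> t 2)"
  proof
    assume a: "s 1 \<and> s 2 \<and> s 4 \<and> t 1 \<and> t 2"
    then have "LA s t 4" using HA by blast
    then show False using a unfolding LA_def cyc_def c3_def by auto
  qed
  have f2: "\<not> (s 1 \<and> s 2 \<and> s 4 \<and> t 1 \<and> t 3)"
  proof
    assume a: "s 1 \<and> s 2 \<and> s 4 \<and> t 1 \<and> t 3"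
    then have "LA s t 4" using HA by blast
    then show False using a unfolding LA_def cyc_def c3_def by auto
  qed
  have f3: "\<not> (s 1 \<and> s 2 \<and> s 4 \<and> t 1 \<and> t 4)"
  proof
    assume a: "s 1 \<and> s 2 \<and> s 4 \<and> t 1 \<and> t 4"
    then have "LA s t 4" using HA by blast
    then show False using a unfolding LA_def cyc_def c3_def by auto
  qed
  have f4: "\<not> (s 1 \<and> s 2 \<and> s 4 \<and> t 1 \<and> t 5)"
  proof
    assume a: "s 1 \<and> s 2 \<and> s 4 \<and> t 1 \<and> t 5"
    then have "LA s t 4" using HA by blast
    then show False using a unfolding LA_def cyc_def c3_def by auto
  qed
  have f5: "\<not> (s 1 \<and> s 2 \<and> s 4 \<and> t 2 \<and> t 3)"
  proof
    assume a: "s 1 \<and> s 2 \<and> s 4 \<and> t 2 \<and> t 3"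
    then have "LA s t 4" using HA by blast
    then show False using a unfolding LA_def cyc_def c3_def by auto
  qed
  have f6: "\<not> (s 1 \<and> s 2 \<and> s 4 \<and> t 2 \<and> t 4)"
  proof
    assume a: "s 1 \<and> s 2 \<and> s 4 \<and> t 2 \<and> t 4"
    then have "LB s t 4" using HB by blast
    then show False using a unfolding LB_def cyc_def c3_def by auto
  qed
  have f7: "\<not> (s 1 \<and> s 2 \<and> s 4 \<and> t 2 \<and> t 5)"
  proof
    assume a: "s 1 \<and> s 2 \<and> s 4 \<and> t 2 \<and> t 5"
    then have "LB s t 2" using HB by blast
    then show False using a unfolding LB_def cyc_def c3_def by auto
  qed
  have f8: "\<not> (s 1 \<and> s 2 \<and> s 4 \<and> t 3 \<and> t 4)"
  proof
    assume a: "s 1 \<and> s 2 \<and> s 4 \<and> t 3 \<and> t 4"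
    then have "LA s t 4" using HA by blast
    then show False using a unfolding LA_def cyc_def c3_def by auto
  qed
  have f9: "\<not> (s 1 \<and> s 2 \<and> s 4 \<and> t 3 \<and> t 5)"
  proof
    assume a: "s 1 \<and> s 2 \<and> s 4 \<and> t 3 \<and> t 5"
    then have "LB s t 3" using HB by blast
    then show False using a unfolding LB_def cyc_def c3_def by auto
  qed
  have f10: "\<not> (s 1 \<and> s 2 \<and> s 4 \<and> t 4 \<and> t 5)"
  proof
    assume a: "s 1 \<and> s 2 \<and> s 4 \<and> t 4 \<and> t 5"
    then have "LA s t 4" using HA by blast
    then show False using a unfolding LA_def cyc_def c3_def by auto
  qed
  have f11: "\<not> (s 1 \<and> s 2 \<and> s 5 \<and> t 1 \<and> t 2)"
  proof
    assume a: "s 1 \<and> s 2 \<and> s 5 \<and> t 1 \<and> t 2"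
    then have "LA s t 2" using HA by blast
    then show False using a unfolding LA_def cyc_def c3_def by auto
  qed
  have f12: "\<not> (s 1 \<and> s 2 \<and> s 5 \<and> t 1 \<and> t 3)"
  proof
    assume a: "s 1 \<and> s 2 \<and> s 5 \<and> t 1 \<and> t 3"
    then have "LA s t 2" using HA by blast
    then show False using a unfolding LA_def cyc_def c3_def by auto
  qed
  have f13: "\<not> (s 1 \<and> s 2 \<and> s 5 \<and> t 1 \<and> t 4)"
  proof
    assume a: "s 1 \<and> s 2 \<and> s 5 \<and> t 1 \<and> t 4"
    then have "LA s t 2" using HA by blast
    then show False using a unfolding LA_def cyc_def c3_def by auto
  qed
  have f14: "\<not> (s 1 \<and> s 2 \<and> s 5 \<and> t 1 \<and> t 5)"
  proof
    assume a: "s 1 \<and> s 2 \<and> s 5 \<and> t 1 \<and> t 5"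
    then have "LA s t 2" using HA by blast
    then show False using a unfolding LA_def cyc_def c3_def by auto
  qed
  have f15: "\<not> (s 1 \<and> s 2 \<and> s 5 \<and> t 2 \<and> t 3)"
  proof
    assume a: "s 1 \<and> s 2 \<and> s 5 \<and> t 2 \<and> t 3"
    then have "LA s t 2" using HA by blast
    then show False using a unfolding LA_def cyc_def c3_def by auto
  qed
  have f16: "\<not> (s 1 \<and> s 2 \<and> s 5 \<and> t 2 \<and> t 4)"
  proof
    assume a: "s 1 \<and> s 2 \<and> s 5 \<and> t 2 \<and> t 4"
    then have "LB s t 4" using HB by blast
    then show False using a unfolding LB_def cyc_def c3_def by auto
  qed
  have f17: "\<not> (s 1 \<and> s 2 \<and> s 5 \<and> t 2 \<and> t 5)"
  proof
    assume a: "s 1 \<and> s 2 \<and> s 5 \<and> t 2 \<and> t 5"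
    then have "LB s t 2" using HB by blast
    then show False using a unfolding LB_def cyc_def c3_def by auto
  qed
  have f18: "\<not> (s 1 \<and> s 2 \<and> s 5 \<and> t 3 \<and> t 4)"
  proof
    assume a: "s 1 \<and> s 2 \<and> s 5 \<and> t 3 \<and> t 4"
    then have "LA s t 2" using HA by blast
    then show False using a unfolding LA_def cyc_def c3_def by auto
  qed
  have f19: "\<not> (s 1 \<and> s 2 \<and> s 5 \<and> t 3 \<and> t 5)"
  proof
    assume a: "s 1 \<and> s 2 \<and> s 5 \<and> t 3 \<and> t 5"
    then have "LB s t 3" using HB by blast
    then show False using a unfolding LB_def cyc_def c3_def by auto
  qed
  have f20: "\<not> (s 1 \<and> s 2 \<and> s 5 \<and> t 4 \<and> t 5)"
  proof
    assume a: "s 1 \<and> s 2 \<and> s 5 \<and> t 4 \<and> t 5"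
    then have "LA s t 2" using HA by blast
    then show False using a unfolding LA_def cyc_def c3_def by auto
  qed
  have f21: "\<not> (s 1 \<and> s 3 \<and> s 4)"
  proof
    assume a: "s 1 \<and> s 3 \<and> s 4"
    then have "LA s t 1" using HA by blast
    then show False using a unfolding LA_def cyc_def c3_def by auto
  qed
  have f22: "\<not> (s 1 \<and> s 3 \<and> s 5)"
  proof
    assume a: "s 1 \<and> s 3 \<and> s 5"
    then have "LA s t 3" using HA by blast
    then show False using a unfolding LA_def cyc_def c3_def by auto
  qed
  have f23: "\<not> (s 1 \<and> s 4 \<and> s 5)"
  proof
    assume a: "s 1 \<and> s 4 \<and> s 5"
    then have "LA s t 1" using HA by blast
    then show False using a unfolding LA_def cyc_def c3_def by auto
  qed
  have f24: "\<not> (s 2 \<and> s 3 \<and> s 4 \<and> t 1 \<and> t 2)"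
  proof
    assume a: "s 2 \<and> s 3 \<and> s 4 \<and> t 1 \<and> t 2"
    then have "LA s t 2" using HA by blast
    then show False using a unfolding LA_def cyc_def c3_def by auto
  qed
  have f25: "\<not> (s 2 \<and> s 3 \<and> s 4 \<and> t 1 \<and> t 3)"
  proof
    assume a: "s 2 \<and> s 3 \<and> s 4 \<and> t 1 \<and> t 3"
    then have "LA s t 2" using HA by blast
    then show False using a unfolding LA_def cyc_def c3_def by auto
  qed
  have f26: "\<not> (s 2 \<and> s 3 \<and> s 4 \<and> t 1 \<and> t 4)"
  proof
    assume a: "s 2 \<and> s 3 \<and> s 4 \<and> t 1 \<and> t 4"
    then have "LA s t 2" using HA by blast
    then show False using a unfolding LA_def cyc_def c3_def by auto
  qed
  have f27: "\<not> (s 2 \<and> s 3 \<and> s 4 \<and> t 1 \<and> t 5)"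
  proof
    assume a: "s 2 \<and> s 3 \<and> s 4 \<and> t 1 \<and> t 5"
    then have "LA s t 2" using HA by blast
    then show False using a unfolding LA_def cyc_def c3_def by auto
  qed
  have f28: "\<not> (s 2 \<and> s 3 \<and> s 4 \<and> t 2 \<and> t 3)"
  proof
    assume a: "s 2 \<and> s 3 \<and> s 4 \<and> t 2 \<and> t 3"
    then have "LA s t 2" using HA by blast
    then show False using a unfolding LA_def cyc_def c3_def by auto
  qed
  have f29: "\<not> (s 2 \<and> s 3 \<and> s 4 \<and> t 2 \<and> t 4)"
  proof
    assume a: "s 2 \<and> s 3 \<and> s 4 \<and> t 2 \<and> t 4"
    then have "LB s t 4" using HB by blast
    then show False using a unfolding LB_def cyc_def c3_def by auto
  qed
  have f30: "\<not> (s 2 \<and> s 3 \<and> s 4 \<and> t 2 \<and> t 5)"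
  proof
    assume a: "s 2 \<and> s 3 \<and> s 4 \<and> t 2 \<and> t 5"
    then have "LB s t 2" using HB by blast
    then show False using a unfolding LB_def cyc_def c3_def by auto
  qed
  have f31: "\<not> (s 2 \<and> s 3 \<and> s 4 \<and> t 3 \<and> t 4)"
  proof
    assume a: "s 2 \<and> s 3 \<and> s 4 \<and> t 3 \<and> t 4"
    then have "LA s t 2" using HA by blast
    then show False using a unfolding LA_def cyc_def c3_def by auto
  qed
  have f32: "\<not> (s 2 \<and> s 3 \<and> s 4 \<and> t 3 \<and> t 5)"
  proof
    assume a: "s 2 \<and> s 3 \<and> s 4 \<and> t 3 \<and> t 5"
    then have "LB s t 3" using HB by blast
    then show False using a unfolding LB_def cyc_def c3_def by auto
  qed
  have f33: "\<not> (s 2 \<and> s 3 \<and> s 4 \<and> t 4 \<and> t 5)"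
  proof
    assume a: "s 2 \<and> s 3 \<and> s 4 \<and> t 4 \<and> t 5"
    then have "LA s t 2" using HA by blast
    then show False using a unfolding LA_def cyc_def c3_def by auto
  qed
  have f34: "\<not> (s 2 \<and> s 3 \<and> s 5 \<and> t 1 \<and> t 2)"
  proof
    assume a: "s 2 \<and> s 3 \<and> s 5 \<and> t 1 \<and> t 2"
    then have "LA s t 5" using HA by blast
    then show False using a unfolding LA_def cyc_def c3_def by auto
  qed
  have f35: "\<not> (s 2 \<and> s 3 \<and> s 5 \<and> t 1 \<and> t 3)"
  proof
    assume a: "s 2 \<and> s 3 \<and> s 5 \<and> t 1 \<and> t 3"
    then have "LA s t 5" using HA by blast
    then show False using a unfolding LA_def cyc_def c3_def by auto
  qed
  have f36: "\<not> (s 2 \<and> s 3 \<and> s 5 \<and> t 1 \<and> t 4)"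
  proof
    assume a: "s 2 \<and> s 3 \<and> s 5 \<and> t 1 \<and> t 4"
    then have "LA s t 5" using HA by blast
    then show False using a unfolding LA_def cyc_def c3_def by auto
  qed
  have f37: "\<not> (s 2 \<and> s 3 \<and> s 5 \<and> t 1 \<and> t 5)"
  proof
    assume a: "s 2 \<and> s 3 \<and> s 5 \<and> t 1 \<and> t 5"
    then have "LA s t 5" using HA by blast
    then show False using a unfolding LA_def cyc_def c3_def by auto
  qed
  have f38: "\<not> (s 2 \<and> s 3 \<and> s 5 \<and> t 2 \<and> t 3)"
  proof
    assume a: "s 2 \<and> s 3 \<and> s 5 \<and> t 2 \<and> t 3"
    then have "LA s t 5" using HA by blast
    then show False using a unfolding LA_def cyc_def c3_def by auto
  qed
  have f39: "\<not> (s 2 \<and> s 3 \<and> s 5 \<and> t 2 \<and> t 4)"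
  proof
    assume a: "s 2 \<and> s 3 \<and> s 5 \<and> t 2 \<and> t 4"
    then have "LB s t 4" using HB by blast
    then show False using a unfolding LB_def cyc_def c3_def by auto
  qed
  have f40: "\<not> (s 2 \<and> s 3 \<and> s 5 \<and> t 2 \<and> t 5)"
  proof
    assume a: "s 2 \<and> s 3 \<and> s 5 \<and> t 2 \<and> t 5"
    then have "LB s t 2" using HB by blast
    then show False using a unfolding LB_def cyc_def c3_def by auto
  qed
  have f41: "\<not> (s 2 \<and> s 3 \<and> s 5 \<and> t 3 \<and> t 4)"
  proof
    assume a: "s 2 \<and> s 3 \<and> s 5 \<and> t 3 \<and> t 4"
    then have "LA s t 5" using HA by blast
    then show False using a unfolding LA_def cyc_def c3_def by auto
  qed
  have f42: "\<not> (s 2 \<and> s 3 \<and> s 5 \<and> t 3 \<and> t 5)"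
  proof
    assume a: "s 2 \<and> s 3 \<and> s 5 \<and> t 3 \<and> t 5"
    then have "LB s t 3" using HB by blast
    then show False using a unfolding LB_def cyc_def c3_def by auto
  qed
  have f43: "\<not> (s 2 \<and> s 3 \<and> s 5 \<and> t 4 \<and> t 5)"
  proof
    assume a: "s 2 \<and> s 3 \<and> s 5 \<and> t 4 \<and> t 5"
    then have "LA s t 5" using HA by blast
    then show False using a unfolding LA_def cyc_def c3_def by auto
  qed
  have f44: "\<not> (s 2 \<and> s 4 \<and> s 5 \<and> t 1 \<and> t 2)"
  proof
    assume a: "s 2 \<and> s 4 \<and> s 5 \<and> t 1 \<and> t 2"
    then have "LA s t 2" using HA by blast
    then show False using a unfolding LA_def cyc_def c3_def by auto
  qed
  have f45: "\<not> (s 2 \<and> s 4 \<and> s 5 \<and> t 1 \<and> t 3)"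
  proof
    assume a: "s 2 \<and> s 4 \<and> s 5 \<and> t 1 \<and> t 3"
    then have "LA s t 2" using HA by blast
    then show False using a unfolding LA_def cyc_def c3_def by auto
  qed
  have f46: "\<not> (s 2 \<and> s 4 \<and> s 5 \<and> t 1 \<and> t 4)"
  proof
    assume a: "s 2 \<and> s 4 \<and> s 5 \<and> t 1 \<and> t 4"
    then have "LA s t 2" using HA by blast
    then show False using a unfolding LA_def cyc_def c3_def by auto
  qed
  have f47: "\<not> (s 2 \<and> s 4 \<and> s 5 \<and> t 1 \<and> t 5)"
  proof
    assume a: "s 2 \<and> s 4 \<and> s 5 \<and> t 1 \<and> t 5"
    then have "LA s t 2" using HA by blast
    then show False using a unfolding LA_def cyc_def c3_def by auto
  qed
  have f48: "\<not> (s 2 \<and> s 4 \<and> s 5 \<and> t 2 \<and> t 3)"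
  proof
    assume a: "s 2 \<and> s 4 \<and> s 5 \<and> t 2 \<and> t 3"
    then have "LA s t 2" using HA by blast
    then show False using a unfolding LA_def cyc_def c3_def by auto
  qed
  have f49: "\<not> (s 2 \<and> s 4 \<and> s 5 \<and> t 2 \<and> t 4)"
  proof
    assume a: "s 2 \<and> s 4 \<and> s 5 \<and> t 2 \<and> t 4"
    then have "LB s t 4" using HB by blast
    then show False using a unfolding LB_def cyc_def c3_def by auto
  qed
  have f50: "\<not> (s 2 \<and> s 4 \<and> s 5 \<and> t 2 \<and> t 5)"
  proof
    assume a: "s 2 \<and> s 4 \<and> s 5 \<and> t 2 \<and> t 5"
    then have "LB s t 2" using HB by blast
    then show False using a unfolding LB_def cyc_def c3_def by auto
  qed
  have f51: "\<not> (s 2 \<and> s 4 \<and> s 5 \<and> t 3 \<and> t 4)"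
  proof
    assume a: "s 2 \<and> s 4 \<and> s 5 \<and> t 3 \<and> t 4"
    then have "LA s t 2" using HA by blast
    then show False using a unfolding LA_def cyc_def c3_def by auto
  qed
  have f52: "\<not> (s 2 \<and> s 4 \<and> s 5 \<and> t 3 \<and> t 5)"
  proof
    assume a: "s 2 \<and> s 4 \<and> s 5 \<and> t 3 \<and> t 5"
    then have "LB s t 3" using HB by blast
    then show False using a unfolding LB_def cyc_def c3_def by auto
  qed
  have f53: "\<not> (s 2 \<and> s 4 \<and> s 5 \<and> t 4 \<and> t 5)"
  proof
    assume a: "s 2 \<and> s 4 \<and> s 5 \<and> t 4 \<and> t 5"
    then have "LA s t 2" using HA by blast
    then show False using a unfolding LA_def cyc_def c3_def by auto
  qed
  have f54: "\<not> (s 3 \<and> s 4 \<and> s 5)"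
  proof
    assume a: "s 3 \<and> s 4 \<and> s 5"
    then have "LA s t 3" using HA by blast
    then show False using a unfolding LA_def cyc_def c3_def by auto
  qed

  have A: "cnt s \<le> 3" unfolding cnt_def using f0 f21 f22 f23 f54 by (cases "s 1"; cases "s 2"; cases "s 3"; cases "s 4"; cases "s 5"; simp)
  have C: "cnt s = 3 \<Longrightarrow> (s 1 \<and> s 2 \<and> s 4) \<or> (s 1 \<and> s 2 \<and> s 5) \<or> (s 2 \<and> s 3 \<and> s 4) \<or> (s 2 \<and> s 3 \<and> s 5) \<or> (s 2 \<and> s 4 \<and> s 5)"
    unfolding cnt_def using f0 f21 f22 f23 f54 by (cases "s 1"; cases "s 2"; cases "s 3"; cases "s 4"; cases "s 5"; simp)
  have B0: "s 1 \<and> s 2 \<and> s 4 \<Longrightarrow> cnt t \<le> 1"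
    by (rule pair_le1) (use f1 f2 f3 f4 f5 f6 f7 f8 f9 f10 in blast)+
  have B1: "s 1 \<and> s 2 \<and> s 5 \<Longrightarrow> cnt t \<le> 1"
    by (rule pair_le1) (use f11 f12 f13 f14 f15 f16 f17 f18 f19 f20 in blast)+
  have B2: "s 2 \<and> s 3 \<and> s 4 \<Longrightarrow> cnt t \<le> 1"
    by (rule pair_le1) (use f24 f25 f26 f27 f28 f29 f30 f31 f32 f33 in blast)+
  have B3: "s 2 \<and> s 3 \<and> s 5 \<Longrightarrow> cnt t \<le> 1"
    by (rule pair_le1) (use f34 f35 f36 f37 f38 f39 f40 f41 f42 f43 in blast)+
  have B4: "s 2 \<and> s 4 \<and> s 5 \<Longrightarrow> cnt t \<le> 1"
    by (rule pair_le1) (use f44 f45 f46 f47 f48 f49 f50 f51 f52 f53 in blast)+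
  show ?thesis using A C B0 B1 B2 B3 B4 by blast
qed


lemma zf_sub: "zf_closure V E S \<subseteq> V"
proof
  fix x assume "x \<in> zf_closure V E S" then show "x \<in> V"
  proof (induction rule: zf_closure.induct)
    case (init x) then show ?case by blast
  next
    case (force u w) then show ?case unfolding nbrs_def by blast
  qed
qed
lemma fort_closure:
  assumes F: "is_fort V E F" and T: "F \<inter> T = {}"
  shows "F \<inter> zf_closure V E T = {}"
proof -
  have "x \<notin> F" if "x \<in> zf_closure V E T" for x
    using that
  proof (induction rule: zf_closure.induct)
    case (init x) then show ?case using T by blast
  next
    case (force u w)
    note f = force
    have uV: "u \<in> V" using f(1) zf_sub[of V E T] by (rule subsetD[rotated])
    have uF: "u \<notin> F" using f(3) .
    show ?case
    proof
      assume wF: "w \<in> F"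
      have sub: "nbrs V E u \<inter> F \<subseteq> {w}"
      proof
        fix y assume y: "y \<in> nbrs V E u \<inter> F"
        show "y \<in> {w}"
        proof (rule ccontr)
          assume "y \<notin> {w}"
          then have "y \<noteq> w" by simp
          moreover have "y \<in> nbrs V E u" using y by blast
          ultimately have "y \<notin> F" using f(4) by blast
          then show False using y by blast
        qed
      qed
      have "w \<in> nbrs V E u \<inter> F" using f(2) wF by blast
      with sub have "nbrs V E u \<inter> F = {w}" by blast
      then have c: "card (nbrs V E u \<inter> F) = 1" by simp
      have "u \<in> V - F" using uV uF by blast
      moreover have "\<forall>v\<in>V - F. card (nbrs V E v \<inter> F) \<noteq> 1" using F unfolding is_fort_def by blast
      ultimately have "card (nbrs V E u \<inter> F) \<noteq> 1" by blast
      then show False using c by simp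
    qed
  qed
  then show ?thesis by blast
qed

lemma zfs_hits_fort:
  assumes "zero_forcing_set V E S" "is_fort V E F"
  shows "F \<inter> S \<noteq> {}"
proof
  assume "F \<inter> S = {}"
  then have 1: "F \<inter> zf_closure V E S = {}" using fort_closure assms(2) by blast
  have 2: "F \<subseteq> V" "F \<noteq> {}" using assms(2) unfolding is_fort_def by auto
  have 3: "zf_closure V E S = V" using assms(1) unfolding zero_forcing_set_def by auto
  from 1 have "F \<inter> V = {}" unfolding 3 .
  with 2 show False by blast
qed



lemma nx_range: "1 \<le> i \<Longrightarrow> i \<le> k \<Longrightarrow> 1 \<le> nx k i \<and> nx k i \<le> k"
  by (auto simp: nx_def)
lemma pv_range: "1 \<le> i \<Longrightarrow> i \<le> k \<Longrightarrow> 1 \<le> pv k i \<and> pv k i \<le> k"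
  by (auto simp: pv_def)
lemma pv_nx: "1 \<le> i \<Longrightarrow> i \<le> k \<Longrightarrow> pv k (nx k i) = i"
  by (auto simp: nx_def pv_def)
lemma nx_pv: "1 \<le> i \<Longrightarrow> i \<le> k \<Longrightarrow> nx k (pv k i) = i"
  by (auto simp: nx_def pv_def)
lemma nx_neq: "2 \<le> k \<Longrightarrow> 1 \<le> i \<Longrightarrow> i \<le> k \<Longrightarrow> nx k i \<noteq> i"
  by (auto simp: nx_def)
lemma pv_neq: "2 \<le> k \<Longrightarrow> 1 \<le> i \<Longrightarrow> i \<le> k \<Longrightarrow> pv k i \<noteq> i"
  by (auto simp: pv_def)
lemma inj_nx: "inj_on (nx k) {1..k}"
  by (auto simp: inj_on_def nx_def split: if_splits)

lemma fort_iff: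
  assumes k: "2 \<le> k"
  shows "is_fort (Hk_V k) (Hk_E k) F \<longleftrightarrow> F \<noteq> {} \<and> F \<subseteq> Hk_V k \<and> (\<forall>i\<in>{1..k}. fcyc k F i)"
proof -
  have "(\<forall>v\<in>Hk_V k - F. card (nbrs (Hk_V k) (Hk_E k) v \<inter> F) \<noteq> 1) \<longleftrightarrow>
        (\<forall>i\<in>{1..k}. \<forall>j\<in>{1..5}. (i,j) \<notin> F \<longrightarrow> card (nbrs (Hk_V k) (Hk_E k) (i,j) \<inter> F) \<noteq> 1)"
    by auto
  also have "\<dots> \<longleftrightarrow> (\<forall>i\<in>{1..k}. fcyc k F i)"
    using fort_cond_i[OF k] by auto
  finally show ?thesis unfolding is_fort_def by auto
qed

lemma cnt_card: "card {j\<in>{1..5::nat}. P j} = cnt P"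
proof -
  have "card {j\<in>{1..5::nat}. P j} = (\<Sum>j\<in>{1..5::nat}. if P j then 1 else 0)"
    by (simp add: sum.inter_filter[symmetric])
  also have "\<dots> = cnt P" unfolding five cnt_def by simp
  finally show ?thesis .
qed

lemma card_sum:
  assumes "X \<subseteq> Hk_V k"
  shows "card X = (\<Sum>i\<in>{1..k}. cnt (\<lambda>j. (i,j) \<in> X))"
proof -
  have X: "X = (\<Union>i\<in>{1..k}. Pair i ` {j\<in>{1..5}. (i,j) \<in> X})"
  proof
    show "X \<subseteq> (\<Union>i\<in>{1..k}. Pair i ` {j\<in>{1..5}. (i,j) \<in> X})"
    proof
      fix x assume x: "x \<in> X"
      obtain a b where ab: "x = (a,b)" by (cases x)
      have "1 \<le> a" "a \<le> k" "1 \<le> b" "b \<le> 5" using assms x ab by auto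
      then show "x \<in> (\<Union>i\<in>{1..k}. Pair i ` {j\<in>{1..5}. (i,j) \<in> X})"
        using x ab by (intro UN_I[of a]) auto
    qed
  qed auto
  have "card X = card (\<Union>i\<in>{1..k}. Pair i ` {j\<in>{1..5}. (i,j) \<in> X})"
    using X by (rule arg_cong)
  also have "\<dots> = (\<Sum>i\<in>{1..k}. card (Pair i ` {j\<in>{1..5}. (i,j) \<in> X}))"
    by (rule card_UN_disjoint) auto
  also have "\<dots> = (\<Sum>i\<in>{1..k}. cnt (\<lambda>j. (i,j) \<in> X))"
  proof (rule sum.cong[OF refl])
    fix i :: nat
    have "inj_on (Pair i) A" for A :: "nat set" by (rule inj_onI) simp
    then show "card (Pair i ` {j\<in>{1..5}. (i,j) \<in> X}) = cnt (\<lambda>j. (i,j) \<in> X)"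
      by (simp only: card_image cnt_card)
  qed
  finally show ?thesis .
qed



lemma V_eq: "Hk_V k = {1..k} \<times> {1..5}" by auto
lemma finV: "finite (Hk_V k)" unfolding V_eq by simp
lemma cardV: "card (Hk_V k) = 5 * k" unfolding V_eq by (simp add: card_cartesian_product)

lemma cnt_le5: "cnt s \<le> 5" unfolding cnt_def by simp

definition dc :: "bool \<Rightarrow> bool \<Rightarrow> bool \<Rightarrow> bool \<Rightarrow> bool \<Rightarrow> bool \<Rightarrow> bool \<Rightarrow> bool" where
  "dc p a1 a2 a3 a4 a5 q \<longleftrightarrow> (\<not> a1 \<longrightarrow> (a2 \<and> a5) \<or> (a2 \<and> p) \<or> (a5 \<and> p)) \<and> (\<not> a2 \<longrightarrow> a1 \<and> a3)
     \<and> (\<not> a3 \<longrightarrow> (a2 \<and> a4) \<or> (a2 \<and> q) \<or> (a4 \<and> q)) \<and> (\<not> a4 \<longrightarrow> a3 \<and> a5) \<and> (\<not> a5 \<longrightarrow> a4 \<and> a1)"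

lemma P1: "dc p (a 1) (a 2) (a 3) (a 4) (a 5) q \<Longrightarrow> 3 \<le> cnt a"
  unfolding dc_def cnt_def by (cases "a 1"; cases "a 2"; cases "a 3"; cases "a 4"; cases "a 5"; simp)

lemma P2: "cnt s = 1 \<Longrightarrow> s 2 \<or> s 4 \<or> s 5 \<Longrightarrow>
   cyc p (\<not> s 1) (\<not> s 2) (\<not> s 3) (\<not> s 4) (\<not> s 5) q \<and> \<not> s 1 \<and> \<not> s 3"
  unfolding cyc_def cnt_def c3_def by (cases "s 1"; cases "s 2"; cases "s 3"; cases "s 4"; cases "s 5"; simp)

definition R1 where "R1 s \<longleftrightarrow> (s 2 \<and> s 3) \<or> (s 3 \<and> s 4) \<or> (s 4 \<and> s 5)"
definition R3 where "R3 s \<longleftrightarrow> (s 1 \<and> s 2) \<or> (s 1 \<and> s 5) \<or> (s 4 \<and> s 5)"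
definition R4 where "R4 s \<longleftrightarrow> s 1 \<and> s 5"
definition R5 where "R5 s \<longleftrightarrow> s 3 \<and> s 4"

lemma P3: "cnt s \<le> 2 \<Longrightarrow> s 2 \<or> s 4 \<or> s 5 \<Longrightarrow>
   cyc True (\<not> s 1 \<and> \<not> R1 s) (\<not> s 2) (\<not> s 3 \<and> \<not> R3 s) (\<not> s 4 \<and> \<not> R4 s) (\<not> s 5 \<and> \<not> R5 s) True"
  unfolding cyc_def cnt_def c3_def R1_def R3_def R4_def R5_def
  by (cases "s 1"; cases "s 2"; cases "s 3"; cases "s 4"; cases "s 5"; simp)

lemma P4: "s 1 \<Longrightarrow> s 3 \<Longrightarrow> s 2 \<or> s 4 \<or> s 5 \<Longrightarrow> 3 \<le> cnt s"
  unfolding cnt_def by (cases "s 2"; cases "s 4"; cases "s 5"; simp)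

lemma P4': "s 1 \<Longrightarrow> s 3 \<Longrightarrow> 2 \<le> cnt s"
  unfolding cnt_def by (cases "s 2"; cases "s 4"; cases "s 5"; simp)

lemma P5: "s 2 \<or> s 4 \<or> s 5 \<Longrightarrow> 1 \<le> cnt s"
  unfolding cnt_def by auto

lemma deg: assumes "2 \<le> k" "v \<in> Hk_V k"
  shows "card (nbrs (Hk_V k) (Hk_E k) v) = 2 \<or> card (nbrs (Hk_V k) (Hk_E k) v) = 3"
proof -
  obtain i j where v: "v = (i,j)" "1 \<le> i" "i \<le> k" "1 \<le> j" "j \<le> 5" using assms(2) by (cases v) auto
  then have "j = 1 \<or> j = 2 \<or> j = 3 \<or> j = 4 \<or> j = 5" by auto
  then show ?thesis
    using v nb1[OF assms(1) v(2,3)] nb2[OF assms(1) v(2,3)] nb3[OF assms(1) v(2,3)]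
      nb4[OF assms(1) v(2,3)] nb5[OF assms(1) v(2,3)] by auto
qed

lemma min_deg: assumes "2 \<le> k" shows "min_degree (Hk_V k) (Hk_E k) = 2"
  unfolding min_degree_def
proof (rule Min_eqI)
  show "finite ((\<lambda>v. card (nbrs (Hk_V k) (Hk_E k) v)) ` Hk_V k)" using finV by simp
  show "2 \<le> y" if "y \<in> (\<lambda>v. card (nbrs (Hk_V k) (Hk_E k) v)) ` Hk_V k" for y
    using that deg[OF assms] by force
  have "card (nbrs (Hk_V k) (Hk_E k) (1,2)) = 2" using nb2[OF assms, of 1] assms by simp
  moreover have "(1,2) \<in> Hk_V k" using assms by simp
  ultimately show "2 \<in> (\<lambda>v. card (nbrs (Hk_V k) (Hk_E k) v)) ` Hk_V k" by force
qed

lemma dcard2': "a \<noteq> b \<Longrightarrow> 2 \<le> card ({a,b} \<inter> F) \<longleftrightarrow> (a \<in> F \<and> b \<in> F)"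
  by (cases "a \<in> F"; cases "b \<in> F"; simp add: Int_insert_left)

lemma dcard3': "a \<noteq> b \<Longrightarrow> a \<noteq> c \<Longrightarrow> b \<noteq> c \<Longrightarrow> 2 \<le> card ({a,b,c} \<inter> F) \<longleftrightarrow> ((a \<in> F \<and> b \<in> F) \<or> (a \<in> F \<and> c \<in> F) \<or> (b \<in> F \<and> c \<in> F))"
  by (cases "a \<in> F"; cases "b \<in> F"; cases "c \<in> F"; simp add: Int_insert_left)

definition ddc :: "nat \<Rightarrow> (nat \<times> nat) set \<Rightarrow> nat \<Rightarrow> bool" where
  "ddc k D i \<longleftrightarrow> dc ((pv k i, 3) \<in> D) ((i,1) \<in> D) ((i,2) \<in> D) ((i,3) \<in> D) ((i,4) \<in> D) ((i,5) \<in> D) ((nx k i, 1) \<in> D)"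

lemma dom_cond: assumes "2 \<le> k" "1 \<le> i" "i \<le> k"
  shows "(\<forall>j\<in>{1..5}. (i,j) \<notin> D \<longrightarrow> 2 \<le> card (nbrs (Hk_V k) (Hk_E k) (i,j) \<inter> D)) \<longleftrightarrow> ddc k D i"
proof -
  have "(\<forall>j\<in>{1..5}. (i,j) \<notin> D \<longrightarrow> 2 \<le> card (nbrs (Hk_V k) (Hk_E k) (i,j) \<inter> D)) \<longleftrightarrow>
    ((i,1) \<notin> D \<longrightarrow> 2 \<le> card (nbrs (Hk_V k) (Hk_E k) (i,1) \<inter> D)) \<and>
    ((i,2) \<notin> D \<longrightarrow> 2 \<le> card (nbrs (Hk_V k) (Hk_E k) (i,2) \<inter> D)) \<and>
    ((i,3) \<notin> D \<longrightarrow> 2 \<le> card (nbrs (Hk_V k) (Hk_E k) (i,3) \<inter> D)) \<and>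
    ((i,4) \<notin> D \<longrightarrow> 2 \<le> card (nbrs (Hk_V k) (Hk_E k) (i,4) \<inter> D)) \<and>
    ((i,5) \<notin> D \<longrightarrow> 2 \<le> card (nbrs (Hk_V k) (Hk_E k) (i,5) \<inter> D))"
    unfolding five by simp
  also have "\<dots> \<longleftrightarrow> ddc k D i"
    unfolding nb1[OF assms] nb2[OF assms] nb3[OF assms] nb4[OF assms] nb5[OF assms] ddc_def dc_def
    by (simp add: dcard2' dcard3')
  finally show ?thesis .
qed

lemma dom_iff:
  assumes k: "2 \<le> k"
  shows "two_dominating (Hk_V k) (Hk_E k) D \<longleftrightarrow> D \<subseteq> Hk_V k \<and> (\<forall>i\<in>{1..k}. ddc k D i)"
proof -
  have "(\<forall>v\<in>Hk_V k - D. 2 \<le> card (nbrs (Hk_V k) (Hk_E k) v \<inter> D)) \<longleftrightarrow>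
        (\<forall>i\<in>{1..k}. \<forall>j\<in>{1..5}. (i,j) \<notin> D \<longrightarrow> 2 \<le> card (nbrs (Hk_V k) (Hk_E k) (i,j) \<inter> D))"
    by auto
  also have "\<dots> \<longleftrightarrow> (\<forall>i\<in>{1..k}. ddc k D i)"
    using dom_cond[OF k] by auto
  finally show ?thesis unfolding two_dominating_def by auto
qed

definition D0 :: "nat \<Rightarrow> (nat \<times> nat) set" where
  "D0 k = {(i,j). 1 \<le> i \<and> i \<le> k \<and> (j = 2 \<or> j = 4 \<or> j = 5)}"

lemma D0_sub: "D0 k \<subseteq> Hk_V k" unfolding D0_def by auto

lemma card_D0: "card (D0 k) = 3 * k"
proof -
  have "card (D0 k) = (\<Sum>i\<in>{1..k}. cnt (\<lambda>j. (i,j) \<in> D0 k))" by (rule card_sum[OF D0_sub])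
  also have "\<dots> = (\<Sum>i\<in>{1..k}. 3)" by (rule sum.cong) (auto simp: cnt_def D0_def)
  finally show ?thesis by simp
qed

lemma gamma2_val: assumes k: "2 \<le> k" shows "gamma2 (Hk_V k) (Hk_E k) = 3 * k"
  unfolding gamma2_def
proof (rule Min_eqI)
  show "finite {card D |D. two_dominating (Hk_V k) (Hk_E k) D}"
  proof (rule finite_subset)
    show "{card D |D. two_dominating (Hk_V k) (Hk_E k) D} \<subseteq> {..card (Hk_V k)}"
      using finV by (auto simp: two_dominating_def intro: card_mono)
  qed simp
  show "3 * k \<le> y" if yy: "y \<in> {card D |D. two_dominating (Hk_V k) (Hk_E k) D}" for y
  proof -
    obtain D where D: "y = card D" "two_dominating (Hk_V k) (Hk_E k) D" using yy by blast
    have sub: "D \<subseteq> Hk_V k" and dd: "\<forall>i\<in>{1..k}. ddc k D i" using D(2) dom_iff[OF k] by auto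
    have "(\<Sum>i\<in>{1..k}. (3::nat)) \<le> (\<Sum>i\<in>{1..k}. cnt (\<lambda>j. (i,j) \<in> D))"
    proof (rule sum_mono)
      fix i assume "i \<in> {1..k}"
      then have "ddc k D i" using dd by auto
      then show "3 \<le> cnt (\<lambda>j. (i,j) \<in> D)" unfolding ddc_def by (rule P1)
    qed
    then show ?thesis using D(1) card_sum[OF sub] by simp
  qed
  have "two_dominating (Hk_V k) (Hk_E k) (D0 k)"
    unfolding dom_iff[OF k] using D0_sub by (auto simp: ddc_def dc_def D0_def)
  then show "3 * k \<in> {card D |D. two_dominating (Hk_V k) (Hk_E k) D}"
    using card_D0 by (metis (mono_tags, lifting) mem_Collect_eq)
qed



lemma priv_fort:
  assumes k: "2 \<le> k" and Z: "ZIr_set (Hk_V k) (Hk_E k) S" and x: "x \<in> S"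
  obtains F where "is_fort (Hk_V k) (Hk_E k) F" "S \<inter> F = {x}"
  using Z x unfolding ZIr_set_def private_fort_def by blast

lemma zir_loc:
  assumes k: "2 \<le> k" and Z: "ZIr_set (Hk_V k) (Hk_E k) S" and i: "1 \<le> i" "i \<le> k"
  shows "cnt (\<lambda>j. (i,j) \<in> S) \<le> 3 \<and> (cnt (\<lambda>j. (i,j) \<in> S) = 3 \<longrightarrow> cnt (\<lambda>j. (nx k i,j) \<in> S) \<le> 1)"
proof (rule zir_pure)
  define i' where "i' = nx k i"
  have i': "1 \<le> i'" "i' \<le> k" "i' \<noteq> i" "pv k i' = i"
    using nx_range[OF i] nx_neq[OF k i] pv_nx[OF i] unfolding i'_def by auto
  have cycs: "fcyc k F i \<and> fcyc k F i'" if "is_fort (Hk_V k) (Hk_E k) F" for F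
    using that fort_iff[OF k] i i' by auto
  show "LA (\<lambda>j. (i,j) \<in> S) (\<lambda>j. (nx k i,j) \<in> S) j0" if hj: "(i,j0) \<in> S" for j0
  proof -
    obtain F where F: "is_fort (Hk_V k) (Hk_E k) F" "S \<inter> F = {(i,j0)}"
      using priv_fort[OF k Z hj] by blast
    have c1: "fcyc k F i" and c2: "fcyc k F i'" using cycs[OF F(1)] by auto
    have m1: "(i,j) \<in> S \<Longrightarrow> ((i,j) \<in> F \<longleftrightarrow> j0 = j)" for j using F(2) by (auto simp: set_eq_iff)
    have m2: "(i',j) \<in> S \<Longrightarrow> (i',j) \<notin> F" for j using F(2) i'(3) by (auto simp: set_eq_iff)
    show ?thesis unfolding LA_def i'_def[symmetric]
      apply (rule exI[where x="(pv k i, 3) \<in> F"])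
      apply (rule exI[where x="(nx k i', 1) \<in> F"])
      apply (rule exI[where x="(i, 1) \<in> F"], rule exI[where x="(i, 2) \<in> F"], rule exI[where x="(i, 3) \<in> F"],
          rule exI[where x="(i, 4) \<in> F"], rule exI[where x="(i, 5) \<in> F"])
      apply (rule exI[where x="(i', 1) \<in> F"], rule exI[where x="(i', 2) \<in> F"], rule exI[where x="(i', 3) \<in> F"],
          rule exI[where x="(i', 4) \<in> F"], rule exI[where x="(i', 5) \<in> F"])
      apply (intro conjI)
      using c1 apply (simp only: fcyc_def i'_def[symmetric])
      using c2 apply (simp only: fcyc_def i'(4))
      using m1 m2 by auto
  qed
  show "LB (\<lambda>j. (i,j) \<in> S) (\<lambda>j. (nx k i,j) \<in> S) j0" if hj: "(nx k i,j0) \<in> S" for j0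
  proof -
    obtain F where F: "is_fort (Hk_V k) (Hk_E k) F" "S \<inter> F = {(i',j0)}"
      using priv_fort[OF k Z hj] unfolding i'_def by blast
    have c1: "fcyc k F i" and c2: "fcyc k F i'" using cycs[OF F(1)] by auto
    have m1: "(i,j) \<in> S \<Longrightarrow> (i,j) \<notin> F" for j using F(2) i'(3) by (auto simp: set_eq_iff)
    have m2: "(i',j) \<in> S \<Longrightarrow> ((i',j) \<in> F \<longleftrightarrow> j0 = j)" for j using F(2) by (auto simp: set_eq_iff)
    show ?thesis unfolding LB_def i'_def[symmetric]
      apply (rule exI[where x="(pv k i, 3) \<in> F"])
      apply (rule exI[where x="(nx k i', 1) \<in> F"])
      apply (rule exI[where x="(i, 1) \<in> F"], rule exI[where x="(i, 2) \<in> F"], rule exI[where x="(i, 3) \<in> F"],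
          rule exI[where x="(i, 4) \<in> F"], rule exI[where x="(i, 5) \<in> F"])
      apply (rule exI[where x="(i', 1) \<in> F"], rule exI[where x="(i', 2) \<in> F"], rule exI[where x="(i', 3) \<in> F"],
          rule exI[where x="(i', 4) \<in> F"], rule exI[where x="(i', 5) \<in> F"])
      apply (intro conjI)
      using c1 apply (simp only: fcyc_def i'_def[symmetric])
      using c2 apply (simp only: fcyc_def i'(4))
      using m1 m2 by auto
  qed
qed



lemma sum_bool_card: "finite I \<Longrightarrow> A \<subseteq> I \<Longrightarrow> (\<Sum>i\<in>I. (of_bool (i \<in> A) :: int)) = int (card A)"
  by (simp add: sum_of_bool_eq Int_absorb1 Int_def[symmetric] inf.absorb2)

lemma zir_le:
  assumes k: "2 \<le> k" and Z: "ZIr_set (Hk_V k) (Hk_E k) S"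
  shows "card S \<le> 2 * k"
proof -
  define c where "c i = cnt (\<lambda>j. (i,j) \<in> S)" for i
  define A where "A = {i\<in>{1..k}. c i = 3}"
  have sub: "S \<subseteq> Hk_V k" using Z unfolding ZIr_set_def by auto
  have loc: "c i \<le> 3 \<and> (c i = 3 \<longrightarrow> c (nx k i) \<le> 1)" if "i \<in> {1..k}" for i
    using zir_loc[OF k Z] that unfolding c_def by auto
  have A_sub: "A \<subseteq> {1..k}" unfolding A_def by auto
  have nA_sub: "nx k ` A \<subseteq> {1..k}"
  proof
    fix y assume "y \<in> nx k ` A"
    then obtain a where "a \<in> A" "y = nx k a" by auto
    then show "y \<in> {1..k}" using A_sub nx_range[of a k] by auto
  qed
  have bound: "int (c i) \<le> 2 + of_bool (i \<in> A) - of_bool (i \<in> nx k ` A)" if i: "i \<in> {1..k}" for i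
  proof (cases "i \<in> A")
    case True
    have "i \<notin> nx k ` A"
    proof
      assume "i \<in> nx k ` A"
      then obtain a where a: "a \<in> A" "i = nx k a" by auto
      then have "c i \<le> 1" using loc[of a] A_sub unfolding A_def by auto
      then show False using True unfolding A_def by auto
    qed
    then show ?thesis using True unfolding A_def by auto
  next
    case False
    then have "c i \<le> 2" using loc[OF i] i unfolding A_def by auto
    moreover have "i \<in> nx k ` A \<Longrightarrow> c i \<le> 1"
    proof -
      assume "i \<in> nx k ` A"
      then obtain a where a: "a \<in> A" "i = nx k a" by auto
      then show "c i \<le> 1" using loc[of a] A_sub unfolding A_def by auto
    qed
    ultimately show ?thesis using False by auto
  qed
  have "int (card S) = (\<Sum>i\<in>{1..k}. int (c i))"
    using card_sum[OF sub] unfolding c_def by simp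
  also have "\<dots> \<le> (\<Sum>i\<in>{1..k}. 2 + of_bool (i \<in> A) - of_bool (i \<in> nx k ` A))"
    by (rule sum_mono) (rule bound)
  also have "\<dots> = 2 * int k + int (card A) - int (card (nx k ` A))"
  proof -
    have e1: "{Suc 0..k} \<inter> A = A" "{Suc 0..k} \<inter> nx k ` A = nx k ` A" using A_sub nA_sub by auto
    show ?thesis by (simp add: sum.distrib sum_subtractf e1)
  qed
  also have "card (nx k ` A) = card A"
    using inj_on_subset[OF inj_nx A_sub] by (simp add: card_image)
  finally show ?thesis by simp
qed

definition Ss :: "nat \<Rightarrow> (nat \<times> nat) set" where
  "Ss k = {(i,j). 1 \<le> i \<and> i \<le> k \<and> (j = 1 \<or> j = 3)}"

lemma Ss_sub: "Ss k \<subseteq> Hk_V k" unfolding Ss_def by auto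

lemma card_Ss: "card (Ss k) = 2 * k"
proof -
  have "card (Ss k) = (\<Sum>i\<in>{1..k}. cnt (\<lambda>j. (i,j) \<in> Ss k))" by (rule card_sum[OF Ss_sub])
  also have "\<dots> = (\<Sum>i\<in>{1..k}. 2)" by (rule sum.cong) (auto simp: cnt_def Ss_def)
  finally show ?thesis by simp
qed

lemma D0_fort:
  assumes k: "2 \<le> k" and F: "D0 k \<subseteq> F" "F \<subseteq> Hk_V k"
  shows "is_fort (Hk_V k) (Hk_E k) F"
proof -
  have "(1,2) \<in> F" using F(1) k unfolding D0_def by auto
  moreover have "fcyc k F i" if "i \<in> {1..k}" for i
  proof -
    have "(i,2) \<in> F" "(i,4) \<in> F" "(i,5) \<in> F" using F(1) that unfolding D0_def by auto
    then show ?thesis unfolding fcyc_def cyc_def c3_def by auto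
  qed
  ultimately show ?thesis using fort_iff[OF k] F(2) by auto
qed

lemma Ss_zir: assumes k: "2 \<le> k" shows "ZIr_set (Hk_V k) (Hk_E k) (Ss k)"
  unfolding ZIr_set_def
proof (intro conjI ballI)
  show "Ss k \<subseteq> Hk_V k" by (rule Ss_sub)
  fix x assume x: "x \<in> Ss k"
  have "is_fort (Hk_V k) (Hk_E k) (D0 k \<union> {x})"
    by (rule D0_fort[OF k]) (use x D0_sub Ss_sub in auto)
  moreover have "Ss k \<inter> (D0 k \<union> {x}) = {x}" using x unfolding Ss_def D0_def by auto
  ultimately show "\<exists>F. private_fort (Hk_V k) (Hk_E k) (Ss k) x F"
    unfolding private_fort_def by blast
qed

lemma Ss_max: assumes k: "2 \<le> k" shows "maximal_ZIr_set (Hk_V k) (Hk_E k) (Ss k)"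
  unfolding maximal_ZIr_set_def
proof (intro conjI allI impI)
  show "ZIr_set (Hk_V k) (Hk_E k) (Ss k)" by (rule Ss_zir[OF k])
  fix T assume T: "ZIr_set (Hk_V k) (Hk_E k) T \<and> Ss k \<subseteq> T"
  show "T = Ss k"
  proof (rule ccontr)
    assume "T \<noteq> Ss k"
    then obtain y where y: "y \<in> T" "y \<notin> Ss k" using T by auto
    have "T \<subseteq> Hk_V k" using T unfolding ZIr_set_def by auto
    then obtain i j where ij: "y = (i,j)" "1 \<le> i" "i \<le> k" "1 \<le> j" "j \<le> 5" using y by (cases y) auto
    have j: "j = 2 \<or> j = 4 \<or> j = 5" using y ij unfolding Ss_def by auto
    have in1: "(i,1) \<in> T" "(i,3) \<in> T" using T ij unfolding Ss_def by auto
    have "3 \<le> cnt (\<lambda>l. (i,l) \<in> T)"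
      by (rule P4) (use in1 j y ij in auto)
    then have "cnt (\<lambda>l. (nx k i,l) \<in> T) \<le> 1"
      using zir_loc[OF k _ ij(2,3), of T] T by auto
    moreover have "2 \<le> cnt (\<lambda>l. (nx k i,l) \<in> T)"
      by (rule P4') (use T nx_range[OF ij(2,3)] in \<open>auto simp: Ss_def\<close>)
    ultimately show False by simp
  qed
qed

lemma ZIR_val: assumes k: "2 \<le> k" shows "ZIR (Hk_V k) (Hk_E k) = 2 * k"
  unfolding ZIR_def
proof (rule Max_eqI)
  show "finite {card S |S. maximal_ZIr_set (Hk_V k) (Hk_E k) S}"
  proof (rule finite_subset)
    show "{card S |S. maximal_ZIr_set (Hk_V k) (Hk_E k) S} \<subseteq> {..card (Hk_V k)}"
      using finV by (auto simp: maximal_ZIr_set_def ZIr_set_def intro: card_mono)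
  qed simp
  show "y \<le> 2 * k" if yy: "y \<in> {card S |S. maximal_ZIr_set (Hk_V k) (Hk_E k) S}" for y
  proof -
    obtain S where S: "y = card S" "maximal_ZIr_set (Hk_V k) (Hk_E k) S" using yy by blast
    then show ?thesis using zir_le[OF k] unfolding maximal_ZIr_set_def by auto
  qed
  show "2 * k \<in> {card S |S. maximal_ZIr_set (Hk_V k) (Hk_E k) S}"
    using Ss_max[OF k] card_Ss by (metis (mono_tags, lifting) mem_Collect_eq)
qed



definition S0 :: "nat \<Rightarrow> (nat \<times> nat) set" where
  "S0 k = {(1,1),(1,4)} \<union> ({1..k} \<times> {2})"

lemma card_S0: assumes "2 \<le> k" shows "card (S0 k) = k + 2"
proof -
  have "card (S0 k) = card {(1::nat,1::nat),(1,4)} + card ({1..k} \<times> {2::nat})"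
    unfolding S0_def by (rule card_Un_disjoint) auto
  then show ?thesis by (simp add: card_cartesian_product)
qed

lemma S0_zf: assumes k: "2 \<le> k" shows "zero_forcing_set (Hk_V k) (Hk_E k) (S0 k)"
proof -
  let ?cl = "zf_closure (Hk_V k) (Hk_E k) (S0 k)"
  have ini: "x \<in> ?cl" if "x \<in> S0 k" "x \<in> Hk_V k" for x using that by (rule zf_closure.init)
  have fs: "w \<in> ?cl" if "u \<in> ?cl" "w \<in> nbrs (Hk_V k) (Hk_E k) u"
      "\<And>y. y \<in> nbrs (Hk_V k) (Hk_E k) u \<Longrightarrow> y \<noteq> w \<Longrightarrow> y \<in> ?cl" for u w
    using that by (intro zf_closure.force[of u _ _ _ w]) auto
  have i2: "(i,2) \<in> ?cl" if "1 \<le> i" "i \<le> k" for i by (rule ini) (use that in \<open>auto simp: S0_def\<close>)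
  have cbase: "(1,j) \<in> ?cl" if "j \<in> {1..5}" for j
  proof -
    have a1: "(1,1) \<in> ?cl" by (rule ini) (use k in \<open>auto simp: S0_def\<close>)
    have a2: "(1,2) \<in> ?cl" using i2 k by auto
    have a4: "(1,4) \<in> ?cl" by (rule ini) (use k in \<open>auto simp: S0_def\<close>)
    have a3: "(1,3) \<in> ?cl"
      by (rule fs[OF a2]) (use a1 nb2[OF k, of 1] k in auto)
    have a5: "(1,5) \<in> ?cl"
      by (rule fs[OF a4]) (use a3 nb4[OF k, of 1] k in auto)
    have "j = 1 \<or> j = 2 \<or> j = 3 \<or> j = 4 \<or> j = 5" using that by auto
    then show ?thesis using a1 a2 a3 a4 a5 by auto
  qed
  have step: "(Suc i,j) \<in> ?cl" if i: "1 \<le> i" "i < k" and IH: "\<And>j. j \<in> {1..5} \<Longrightarrow> (i,j) \<in> ?cl"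
    and j: "j \<in> {1..5}" for i j
  proof -
    have nxi: "nx k i = Suc i" using i by (simp add: nx_def)
    have pvi: "pv k (Suc i) = i" using i by (simp add: pv_def)
    have i1: "1 \<le> Suc i" "Suc i \<le> k" using i by auto
    have b1: "(Suc i,1) \<in> ?cl"
      by (rule fs[of "(i,3)"]) (use IH nb3[OF k i(1)] i nxi in auto)
    have b2: "(Suc i,2) \<in> ?cl" using i2 i1 by auto
    have b3: "(Suc i,3) \<in> ?cl"
      by (rule fs[OF b2]) (use b1 nb2[OF k i1] in auto)
    have b5: "(Suc i,5) \<in> ?cl"
      by (rule fs[OF b1]) (use b2 IH nb1[OF k i1] pvi in auto)
    have b4: "(Suc i,4) \<in> ?cl"
      by (rule fs[OF b5]) (use b1 nb5[OF k i1] in auto)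
    have "j = 1 \<or> j = 2 \<or> j = 3 \<or> j = 4 \<or> j = 5" using j by auto
    then show ?thesis using b1 b2 b3 b4 b5 by auto
  qed
  have all: "i \<le> k \<longrightarrow> (\<forall>j\<in>{1..5}. (i,j) \<in> ?cl)" if "1 \<le> i" for i
    using that
  proof (induction i rule: nat_induct_at_least)
    case base then show ?case using cbase by auto
  next
    case (Suc n) then show ?case using step[of n] by auto
  qed
  have "Hk_V k \<subseteq> ?cl"
  proof
    fix v assume "v \<in> Hk_V k"
    then obtain i j where "v = (i,j)" "1 \<le> i" "i \<le> k" "j \<in> {1..5}" by (cases v) auto
    then show "v \<in> ?cl" using all by auto
  qed
  moreover have "?cl \<subseteq> Hk_V k" by (rule zf_sub)
  moreover have "S0 k \<subseteq> Hk_V k" using k unfolding S0_def by auto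
  ultimately show ?thesis unfolding zero_forcing_set_def by auto
qed



lemma all_one:
  fixes f :: "nat \<Rightarrow> nat"
  assumes "finite I" "\<And>i. i \<in> I \<Longrightarrow> 1 \<le> f i" "sum f I \<le> card I" "i \<in> I"
  shows "f i = 1"
proof -
  have "card I \<le> sum f I" using sum_mono[of I "\<lambda>_. 1" f] assms(2) by simp
  have "(\<Sum>x\<in>I. f x - 1) = sum f I - (\<Sum>x\<in>I. 1)"
    by (rule sum_subtractf_nat) (use assms(2) in auto)
  also have "\<dots> = 0" using assms(3) by simp
  finally have "f i - 1 = 0" using assms(1,4) by simp
  then show ?thesis using assms(2,4) by fastforce
qed

lemma T_fort: assumes k: "2 \<le> k" and i: "1 \<le> i" "i \<le> k"
  shows "is_fort (Hk_V k) (Hk_E k) {(i,2),(i,4),(i,5)}"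
proof -
  have "fcyc k {(i,2),(i,4),(i,5)} m" for m
    unfolding fcyc_def cyc_def c3_def by auto
  then show ?thesis using fort_iff[OF k] i by auto
qed

lemma Z_lower:
  assumes k: "2 \<le> k" and S: "zero_forcing_set (Hk_V k) (Hk_E k) S"
  shows "k + 2 \<le> card S"
proof (rule ccontr)
  assume "\<not> k + 2 \<le> card S"
  then have cS: "card S \<le> k + 1" by simp
  define c where "c i = cnt (\<lambda>j. (i,j) \<in> S)" for i
  define I where "I = {1..k::nat}"
  have sub: "S \<subseteq> Hk_V k" using S unfolding zero_forcing_set_def by auto
  have hit: "(i,2) \<in> S \<or> (i,4) \<in> S \<or> (i,5) \<in> S" if "i \<in> I" for i
    using zfs_hits_fort[OF S T_fort[OF k]] that unfolding I_def by auto
  have c1: "1 \<le> c i" if "i \<in> I" for i unfolding c_def by (rule P5) (rule hit[OF that])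
  have sumc: "card S = sum c I" unfolding c_def I_def by (rule card_sum[OF sub])
  have fI: "finite I" unfolding I_def by simp
  obtain j0 where j0: "j0 \<in> I" "c j0 \<le> 2" "\<And>i. i \<in> I - {j0} \<Longrightarrow> c i = 1"
  proof (cases "\<forall>i\<in>I. c i \<le> 1")
    case True
    show ?thesis
    proof (rule that[of 1])
      show "1 \<in> I" using k unfolding I_def by auto
      show "c 1 \<le> 2" using True \<open>1 \<in> I\<close> by fastforce
      show "c i = 1" if "i \<in> I - {1}" for i using True c1 that by fastforce
    qed
  next
    case False
    then obtain j where j: "j \<in> I" "2 \<le> c j" by (auto simp: not_le)
    have split: "sum c I = c j + sum c (I - {j})" using fI j(1) by (simp add: sum.remove)
    have cardr: "card (I - {j}) = k - 1" using j(1) unfolding I_def by simp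
    have "card (I - {j}) \<le> sum c (I - {j})"
      using sum_mono[of "I - {j}" "\<lambda>_. 1" c] c1 by simp
    then have cj: "c j \<le> 2" using split sumc cS cardr k by linarith
    have "sum c (I - {j}) \<le> card (I - {j})" using split sumc cS cardr k j(2) by linarith
    then have "c i = 1" if "i \<in> I - {j}" for i
      using all_one[of "I - {j}" c i] fI c1 that by auto
    then show ?thesis using that[of j] j(1) cj by auto
  qed
  have k1: "1 \<le> j0" "j0 \<le> k" using j0(1) unfolding I_def by auto
  have other: "\<not> (i,1) \<in> S \<and> \<not> (i,3) \<in> S \<and>
      (\<forall>p q. cyc p (\<not> (i,1) \<in> S) (\<not> (i,2) \<in> S) (\<not> (i,3) \<in> S) (\<not> (i,4) \<in> S) (\<not> (i,5) \<in> S) q)"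
    if io: "i \<in> I" "i \<noteq> j0" for i
  proof -
    have cn: "cnt (\<lambda>l. (i,l) \<in> S) = 1" using j0(3)[of i] io unfolding c_def by auto
    have h: "(i,2) \<in> S \<or> (i,4) \<in> S \<or> (i,5) \<in> S" using hit[OF io(1)] .
    show ?thesis using P2[of "\<lambda>l. (i,l) \<in> S", OF cn h] by blast
  qed
  define s where "s (l::nat) = ((j0,l) \<in> S)" for l
  define RR where "RR (l::nat) = ((l = 1 \<and> R1 s) \<or> (l = 3 \<and> R3 s) \<or> (l = 4 \<and> R4 s) \<or> (l = 5 \<and> R5 s))" for l
  define F where "F = {v \<in> Hk_V k. v \<notin> S \<and> \<not> (fst v = j0 \<and> RR (snd v))}"
  have nxI: "nx k j0 \<in> I" "nx k j0 \<noteq> j0" using nx_range[OF k1] nx_neq[OF k k1] unfolding I_def by auto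
  have pvI: "pv k j0 \<in> I" "pv k j0 \<noteq> j0" using pv_range[OF k1] pv_neq[OF k k1] unfolding I_def by auto
  have q1: "(nx k j0, 1) \<in> F"
    using other[OF nxI] nxI unfolding F_def I_def by auto
  have p1: "(pv k j0, 3) \<in> F"
    using other[OF pvI] pvI unfolding F_def I_def by auto
  have fort: "is_fort (Hk_V k) (Hk_E k) F"
    unfolding fort_iff[OF k]
  proof (intro conjI ballI)
    show "F \<noteq> {}" using q1 by auto
    show "F \<subseteq> Hk_V k" unfolding F_def by auto
    fix m assume m: "m \<in> {1..k}"
    show "fcyc k F m"
    proof (cases "m = j0")
      case True
      have e: "(j0,1) \<in> F \<longleftrightarrow> \<not> s 1 \<and> \<not> R1 s" "(j0,2) \<in> F \<longleftrightarrow> \<not> s 2"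
        "(j0,3) \<in> F \<longleftrightarrow> \<not> s 3 \<and> \<not> R3 s" "(j0,4) \<in> F \<longleftrightarrow> \<not> s 4 \<and> \<not> R4 s"
        "(j0,5) \<in> F \<longleftrightarrow> \<not> s 5 \<and> \<not> R5 s"
        using k1 unfolding F_def s_def RR_def by auto
      have "cnt s \<le> 2" using j0(2) unfolding c_def s_def by simp
      moreover have "s 2 \<or> s 4 \<or> s 5" using hit[OF j0(1)] unfolding s_def by simp
      ultimately have "cyc True (\<not> s 1 \<and> \<not> R1 s) (\<not> s 2) (\<not> s 3 \<and> \<not> R3 s) (\<not> s 4 \<and> \<not> R4 s) (\<not> s 5 \<and> \<not> R5 s) True"
        by (rule P3)
      then show ?thesis unfolding fcyc_def True e using p1 q1 by simp
    next
      case False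
      have mI: "m \<in> I" using m unfolding I_def by simp
      have e: "(m,l) \<in> F \<longleftrightarrow> \<not> (m,l) \<in> S" if "1 \<le> l" "l \<le> 5" for l
        using m False that unfolding F_def by auto
      have "cyc ((pv k m, 3) \<in> F) (\<not> (m,1) \<in> S) (\<not> (m,2) \<in> S) (\<not> (m,3) \<in> S) (\<not> (m,4) \<in> S) (\<not> (m,5) \<in> S) ((nx k m, 1) \<in> F)"
        using other[OF mI False] by blast
      then show ?thesis unfolding fcyc_def using e[of 1] e[of 2] e[of 3] e[of 4] e[of 5] by simp
    qed
  qed
  have "F \<inter> S = {}" unfolding F_def by auto
  then show False using zfs_hits_fort[OF S fort] by simp
qed

lemma Z_val: assumes k: "2 \<le> k" shows "Z (Hk_V k) (Hk_E k) = k + 2"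
  unfolding Z_def
proof (rule Min_eqI)
  show "finite {card S |S. zero_forcing_set (Hk_V k) (Hk_E k) S}"
  proof (rule finite_subset)
    show "{card S |S. zero_forcing_set (Hk_V k) (Hk_E k) S} \<subseteq> {..card (Hk_V k)}"
      using finV by (auto simp: zero_forcing_set_def intro: card_mono)
  qed simp
  show "k + 2 \<le> y" if yy: "y \<in> {card S |S. zero_forcing_set (Hk_V k) (Hk_E k) S}" for y
    using yy Z_lower[OF k] by blast
  show "k + 2 \<in> {card S |S. zero_forcing_set (Hk_V k) (Hk_E k) S}"
    using S0_zf[OF k] card_S0[OF k] by (metis (mono_tags, lifting) mem_Collect_eq)
qed


theorem theorem4p8:
  fixes k :: nat
  assumes "k \<ge> 2"
  shows "card (Hk_V k) = 5 * k
    \<and> min_degree (Hk_V k) (Hk_E k) = 2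
    \<and> real (gamma2 (Hk_V k) (Hk_E k)) = 3 * real (card (Hk_V k)) / 5
    \<and> real (ZIR (Hk_V k) (Hk_E k)) = 2 * real (card (Hk_V k)) / 5
    \<and> ZIR (Hk_V k) (Hk_E k) = card (Hk_V k) - gamma2 (Hk_V k) (Hk_E k)
    \<and> Z (Hk_V k) (Hk_E k) = k + 2"
proof -
  have a: "card (Hk_V k) = 5 * k" by (rule cardV)
  have b: "min_degree (Hk_V k) (Hk_E k) = 2" by (rule min_deg[OF assms])
  have c: "gamma2 (Hk_V k) (Hk_E k) = 3 * k" by (rule gamma2_val[OF assms])
  have d: "ZIR (Hk_V k) (Hk_E k) = 2 * k" by (rule ZIR_val[OF assms])
  have e: "Z (Hk_V k) (Hk_E k) = k + 2" by (rule Z_val[OF assms])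
  show ?thesis unfolding a b c d e by simp
qed

end
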